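(* Let $0<\rho_-<\rho_+<1$, $\varphi_\pm=\log\frac{\rho_\pm}{1-\rho_\pm}$ and $\varphi_0=\max\{|\varphi_-|,|\varphi_+|\}$. Then the bottom and the top of the energy band of the competitive TASEP are $$E^-_{+\infty}=-\bar V^+-\log(1+e^{\varphi_0}),$$ $$E^+_{+\infty}=-\bar V^+ +\begin{cases}\dfrac{\varphi_-\log(1+e^{\varphi_+})-\varphi_+\log(1+e^{\varphi_-})}{\varphi_+-\varphi_-}, & \rho_-\le \tfrac12\le \rho_+,\\[2mm] -\log(1+e^{\varphi_+}), & \rho_-<\rho_+\le \tfrac12,\\[1mm] -\log(1+e^{-\varphi_-}), & \tfrac12\le \rho_-<\rho_+.\end{cases}$$
   Context: Let $s(\theta)=\theta\log\theta+(1-\theta)\log(1-\theta)$ for $\theta\in[0,1]$ (with $0\log 0=0$) and $\chi(\rho)=\rho(1-\rho)$. Let $\mathcal M$ be the set of measurable functions $\rho:[-1,1]\to[0,1]$ (a subset of $L^\infty([-1,1])$ with the weak-$*$ topology). For $\rho\in\mathcal M$ let $\mathbb S(\rho)=-\frac12\int_{-1}^1 s(\rho(x))\,dx$, and for a measurable $\varphi:[-1,1]\to\mathbb R$ let $\mathcal H(\rho,\varphi)=\frac12\int_{-1}^1\big[(1-\rho(x))\varphi(x)-\log(1+e^{\varphi(x)})\big]dx$. Let $\Phi=\{\varphi_y=\varphi_-\mathbf 1_{[-1,y)}+\varphi_+\mathbf 1_{[y,1]}:\ y\in[-1,1]\}$. Set $\bar V^+=\log\big(\min_{\rho\in[\rho_-,\rho_+]}\chi(\rho)\big)$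 and define the quasi-potential of the competitive TASEP by $V^+(\rho)=-\mathbb S(\rho)+\inf_{\varphi\in\Phi}\mathcal H(\rho,\varphi)-\bar V^+$. The bottom and top of the energy band are $E^-_{+\infty}=\inf_{\rho\in\mathcal M}\{\mathbb S(\rho)+V^+(\rho)\}$ and $E^+_{+\infty}=\sup_{\rho\in\mathcal M}\{\mathbb S(\rho)+V^+(\rho)\}$. *)

theory Defs
  imports "HOL-Analysis.Analysis"
begin

definition xlogx :: "real \<Rightarrow> real" where
  "xlogx t = (if t = 0 then 0 else t * ln t)"

definition sfun :: "real \<Rightarrow> real" where
  "sfun \<theta> = xlogx \<theta> + xlogx (1 - \<theta>)"

definition chi :: "real \<Rightarrow> real" where
  "chi r = r * (1 - r)"

definition profiles :: "(real \<Rightarrow> real) set" where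
  "profiles = {\<rho>. set_borel_measurable lebesgue {-1..1} \<rho> \<and> (\<forall>x\<in>{-1..1}. 0 \<le> \<rho> x \<and> \<rho> x \<le> 1)}"

definition entropyS :: "(real \<Rightarrow> real) \<Rightarrow> real" where
  "entropyS \<rho> = - (1/2) * (LINT x:{-1..1}|lebesgue. sfun (\<rho> x))"

definition Hfun :: "(real \<Rightarrow> real) \<Rightarrow> (real \<Rightarrow> real) \<Rightarrow> real" where
  "Hfun \<rho> \<phi> = (1/2) * (LINT x:{-1..1}|lebesgue. (1 - \<rho> x) * \<phi> x - ln (1 + exp (\<phi> x)))"

definition phiy :: "real \<Rightarrow> real \<Rightarrow> real \<Rightarrow> real \<Rightarrow> real" where
  "phiy phim phip y x = (if x < y then phim else phip)"

definition PhiSet :: "real \<Rightarrow> real \<Rightarrow> (real \<Rightarrow> real) set" where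
  "PhiSet phim phip = {phiy phim phip y | y. y \<in> {-1..1}}"

definition logit :: "real \<Rightarrow> real" where
  "logit r = ln (r / (1 - r))"

definition Vbar :: "real \<Rightarrow> real \<Rightarrow> real" where
  "Vbar rm rp = ln (Inf (chi ` {rm..rp}))"

definition Vplus :: "real \<Rightarrow> real \<Rightarrow> (real \<Rightarrow> real) \<Rightarrow> real" where
  "Vplus rm rp \<rho> = - entropyS \<rho> + Inf ((\<lambda>\<phi>. Hfun \<rho> \<phi>) ` PhiSet (logit rm) (logit rp)) - Vbar rm rp"

definition Ebot :: "real \<Rightarrow> real \<Rightarrow> real" where
  "Ebot rm rp = Inf ((\<lambda>\<rho>. entropyS \<rho> + Vplus rm rp \<rho>) ` profiles)"

definition Etop :: "real \<Rightarrow> real \<Rightarrow> real" where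
  "Etop rm rp = Sup ((\<lambda>\<rho>. entropyS \<rho> + Vplus rm rp \<rho>) ` profiles)"

end

theory Submission
  imports Defs
begin

lemma phiy_meas[measurable]: "phiy a b y \<in> borel_measurable lebesgue"
proof -
  have "phiy a b y \<in> borel_measurable borel" unfolding phiy_def by measurable
  then have "phiy a b y \<in> borel_measurable lborel" by simp
  then show ?thesis by (rule measurable_completion)
qed

lemma si:
  fixes F :: "real \<Rightarrow> real \<Rightarrow> real" and B :: real
  assumes "\<rho> \<in> profiles" "T \<in> sets lebesgue" "T \<subseteq> {-1..1}" "emeasure lebesgue T < \<infinity>"
    and Fm: "\<And>r. r \<in> borel_measurable lebesgue \<Longrightarrow> (\<lambda>x. F (r x) x) \<in> borel_measurable lebesgue"
    and Fb: "\<And>x r. x \<in> T \<Longrightarrow> 0 \<le> r \<Longrightarrow> r \<le> 1 \<Longrightarrow> \<bar>F r x\<bar> \<le> B"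
  shows "set_integrable lebesgue T (\<lambda>x. F (\<rho> x) x)"
proof -
  define r where "r x = indicator {-1..1} x * \<rho> x" for x
  have rm: "r \<in> borel_measurable lebesgue"
    using assms(1) unfolding profiles_def set_borel_measurable_def r_def by simp
  have eq: "\<And>x. indicator T x *\<^sub>R F (\<rho> x) x = indicator T x *\<^sub>R F (r x) x"
    using assms(3) by (auto simp: r_def indicator_def)
  have pr: "\<And>x. x \<in> {-1..1} \<Longrightarrow> 0 \<le> \<rho> x \<and> \<rho> x \<le> 1"
    using assms(1) unfolding profiles_def by auto
  have "integrable lebesgue (\<lambda>x. indicator T x *\<^sub>R F (r x) x)"
  proof (rule integrableI_bounded_set_indicator[where B=B])
    show "T \<in> sets lebesgue" by fact
    show "(\<lambda>x. F (r x) x) \<in> borel_measurable lebesgue" using Fm rm .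
    show "emeasure lebesgue T < \<infinity>" by fact
    show "AE x in lebesgue. x \<in> T \<longrightarrow> norm (F (r x) x) \<le> B"
    proof (rule AE_I2, rule impI)
      fix x assume x: "x \<in> T"
      then have "x \<in> {-1..1}" using assms(3) by auto
      then have "r x = \<rho> x" by (simp add: r_def)
      then show "norm (F (r x) x) \<le> B" using Fb[OF x] pr \<open>x \<in> {-1..1}\<close> by auto
    qed
  qed
  then show ?thesis unfolding set_integrable_def eq .
qed

lemma const_int:
  fixes T :: "real set"
  assumes "T \<in> sets lebesgue" "emeasure lebesgue T < \<infinity>"
  shows "set_integrable lebesgue T (\<lambda>_. c::real)"
  unfolding set_integrable_def
  by (rule integrableI_bounded_set_indicator[where B="\<bar>c\<bar>"]) (use assms in auto)

lemma const_val:
  fixes T :: "real set"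
  assumes "T \<in> sets lebesgue" "emeasure lebesgue T < \<infinity>" "measure lebesgue T = 2"
  shows "(LINT x:T|lebesgue. (c::real)) = 2 * c"
  using set_integral_const[of T lebesgue c] assms by simp

lemma mono_lower:
  fixes f :: "real \<Rightarrow> real"
  assumes "T \<in> sets lebesgue" "emeasure lebesgue T < \<infinity>" "measure lebesgue T = 2"
    and "set_integrable lebesgue T f" and "\<And>x. x \<in> T \<Longrightarrow> c \<le> f x"
  shows "2 * c \<le> (LINT x:T|lebesgue. f x)"
proof -
  have "(LINT x:T|lebesgue. c) \<le> (LINT x:T|lebesgue. f x)"
    by (rule set_integral_mono[of lebesgue T "\<lambda>_. c" f]) (use assms const_int in auto)
  then show ?thesis using const_val assms by simp
qed

lemma mono_upper:
  fixes f :: "real \<Rightarrow> real"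
  assumes "T \<in> sets lebesgue" "emeasure lebesgue T < \<infinity>" "measure lebesgue T = 2"
    and "set_integrable lebesgue T f" and "\<And>x. x \<in> T \<Longrightarrow> f x \<le> c"
  shows "(LINT x:T|lebesgue. f x) \<le> 2 * c"
proof -
  have "(LINT x:T|lebesgue. f x) \<le> (LINT x:T|lebesgue. c)"
    by (rule set_integral_mono[of lebesgue T f "\<lambda>_. c"]) (use assms const_int in auto)
  then show ?thesis using const_val assms by simp
qed

lemma AE_S: "AE x in lebesgue. (x \<in> {-1..<1}) = (x \<in> {-1..(1::real)})"
proof -
  have "AE x in lebesgue. (x::real) \<noteq> 1" by (simp add: AE_completion AE_lborel_singleton)
  then show ?thesis by (auto elim: eventually_mono)
qed

lemma cong_S':
  assumes "set_integrable lebesgue {-1..1} (f::real\<Rightarrow>real)"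
  shows "(LINT x:{-1..1}|lebesgue. f x) = (LINT x:{-1..<1}|lebesgue. f x)"
proof -
  have i2: "set_integrable lebesgue {-1..<1} f"
    by (rule set_integrable_subset[OF assms]) auto
  show ?thesis
  proof (rule set_integral_cong_set)
    show "set_borel_measurable lebesgue {-1..<1} f"
      using i2 unfolding set_integrable_def set_borel_measurable_def by auto
    show "set_borel_measurable lebesgue {-1..1} f"
      using assms unfolding set_integrable_def set_borel_measurable_def by auto
    show "AE x in lebesgue. (x \<in> {-1..<1}) = (x \<in> {-1..(1::real)})"
      by (rule AE_S)
  qed
qed

lemma Lsym: "ln (1 + exp x) = x + ln (1 + exp (- x::real))"
proof -
  have e: "exp x * exp (-x) = 1" by (simp add: exp_minus)
  have "1 + exp x = exp x * (1 + exp (-x))" by (simp add: distrib_left e)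
  moreover have "ln (exp x * (1 + exp (-x))) = ln (exp x) + ln (1 + exp (-x))"
    by (rule ln_mult_pos) (simp_all add: add_pos_pos)
  ultimately have "ln (1 + exp x) = ln (exp x) + ln (1 + exp (-x))" by simp
  then show ?thesis by simp
qed

lemma Lmono: "x \<le> y \<Longrightarrow> ln (1 + exp x) \<le> ln (1 + exp (y::real))"
  by (simp add: add_pos_pos)

lemma PW1:
  fixes r p M :: real
  assumes "0 \<le> r" "r \<le> 1" "\<bar>p\<bar> \<le> M"
  shows "- ln (1 + exp M) \<le> (1 - r) * p - ln (1 + exp p)"
proof (cases "p \<ge> 0")
  case True
  have "0 \<le> 1 - r" using assms by simp
  then have "0 \<le> (1 - r) * p" using True by simp
  moreover have "ln (1 + exp p) \<le> ln (1 + exp M)" using assms True by (intro Lmono) auto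
  ultimately show ?thesis by linarith
next
  case False
  then have "p \<le> (1 - r) * p" using assms mult_nonneg_nonpos[of r p] by (simp add: algebra_simps)
  moreover have "ln (1 + exp (-p)) \<le> ln (1 + exp M)" using assms False by (intro Lmono) auto
  moreover note Lsym[of p]
  ultimately show ?thesis by linarith
qed

lemma PWbound:
  fixes r p :: real
  assumes "0 \<le> r" "r \<le> 1"
  shows "\<bar>(1 - r) * p - ln (1 + exp p)\<bar> \<le> \<bar>p\<bar> + ln (1 + exp p)"
proof -
  have "0 \<le> ln (1 + exp p)" using ln_ge_zero[of "1+exp p"] by simp
  moreover have "\<bar>(1 - r) * p\<bar> \<le> \<bar>p\<bar>" using assms mult_left_le_one_le[of "\<bar>p\<bar>" "1-r"] by (simp add: abs_mult)
  ultimately show ?thesis by linarith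
qed

lemma intH:
  assumes "\<rho> \<in> profiles" "T \<in> sets lebesgue" "T \<subseteq> {-1..1}" "emeasure lebesgue T < \<infinity>"
  shows "set_integrable lebesgue T (\<lambda>x. (1 - \<rho> x) * phiy a b y x - ln (1 + exp (phiy a b y x)))"
proof -
  have "set_integrable lebesgue T (\<lambda>x. (\<lambda>r x. (1 - r) * phiy a b y x - ln (1 + exp (phiy a b y x))) (\<rho> x) x)"
  proof (rule si[where F="\<lambda>r x. (1 - r) * phiy a b y x - ln (1 + exp (phiy a b y x))" and B="\<bar>a\<bar> + \<bar>b\<bar> + ln (1 + exp a) + ln (1 + exp b)"])
    fix r :: "real \<Rightarrow> real" assume [measurable]: "r \<in> borel_measurable lebesgue"
    show "(\<lambda>x. (1 - r x) * phiy a b y x - ln (1 + exp (phiy a b y x))) \<in> borel_measurable lebesgue"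
      by measurable
  next
    fix x r :: real assume "0 \<le> r" "r \<le> 1"
    then show "\<bar>(1 - r) * phiy a b y x - ln (1 + exp (phiy a b y x))\<bar> \<le> \<bar>a\<bar> + \<bar>b\<bar> + ln (1 + exp a) + ln (1 + exp b)"
      using PWbound[of r a] PWbound[of r b] 
      by (auto simp: phiy_def add_pos_pos abs_of_pos)
  qed (use assms in auto)
  then show ?thesis by simp
qed

lemma intG:
  assumes "\<rho> \<in> profiles" "T \<in> sets lebesgue" "T \<subseteq> {-1..1}" "emeasure lebesgue T < \<infinity>"
  shows "set_integrable lebesgue T (\<lambda>x. 1 - \<rho> x - s)"
proof -
  have "set_integrable lebesgue T (\<lambda>x. (\<lambda>r x. 1 - r - s) (\<rho> x) x)"
  proof (rule si[where F="\<lambda>r x. 1 - r - s" and B="1 + \<bar>s\<bar>"])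
    fix r :: "real \<Rightarrow> real" assume [measurable]: "r \<in> borel_measurable lebesgue"
    show "(\<lambda>x. 1 - r x - s) \<in> borel_measurable lebesgue" by measurable
  qed (use assms in auto)
  then show ?thesis by simp
qed


lemma set_integrable_cong_helper:
  fixes \<rho> :: "real \<Rightarrow> real"
  assumes h: "set_integrable lebesgue {-1..1} (\<lambda>x. (1 - \<rho> x) * phiy a b (-1) x - ln (1 + exp (phiy a b (-1) x)))"
  shows "set_integrable lebesgue {-1..1} (\<lambda>x. (1 - \<rho> x) * b - ln (1 + exp b))"
proof -
  have "(\<lambda>x. indicator {-1..1} x *\<^sub>R ((1 - \<rho> x) * phiy a b (-1) x - ln (1 + exp (phiy a b (-1) x))))
      = (\<lambda>x. indicator {-1..1} x *\<^sub>R ((1 - \<rho> x) * b - ln (1 + exp b)) :: real)"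
    by (rule ext) (auto simp: indicator_def phiy_def)
  then show ?thesis using h unfolding set_integrable_def by simp
qed

lemma set_integrable_cong_helper':
  fixes \<rho> :: "real \<Rightarrow> real"
  assumes h: "set_integrable lebesgue {-1..<1} (\<lambda>x. (1 - \<rho> x) * phiy a b 1 x - ln (1 + exp (phiy a b 1 x)))"
  shows "set_integrable lebesgue {-1..<1} (\<lambda>x. (1 - \<rho> x) * a - ln (1 + exp a))"
proof -
  have "(\<lambda>x. indicator {-1..<1} x *\<^sub>R ((1 - \<rho> x) * phiy a b 1 x - ln (1 + exp (phiy a b 1 x))))
      = (\<lambda>x. indicator {-1..<1} x *\<^sub>R ((1 - \<rho> x) * a - ln (1 + exp a)) :: real)"
    by (rule ext) (auto simp: indicator_def phiy_def)
  then show ?thesis using h unfolding set_integrable_def by simp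
qed

lemma logit_mono:
  fixes a b :: real
  assumes "0 < a" "a < b" "b < 1"
  shows "ln (a / (1 - a)) < ln (b / (1 - b))"
proof -
  have "a / (1 - a) < b / (1 - b)"
    using assms by (simp add: field_simps)
  moreover have "0 < a / (1 - a)" using assms by simp
  ultimately show ?thesis by simp
qed

lemma logit_nonpos:
  fixes r :: real
  assumes "0 < r" "r \<le> 1/2"
  shows "ln (r / (1 - r)) \<le> 0"
proof -
  have "r / (1 - r) \<le> 1" using assms by (simp add: field_simps)
  moreover have "0 < r / (1 - r)" using assms by simp
  ultimately show ?thesis by simp
qed

lemma logit_nonneg:
  fixes r :: real
  assumes "1/2 \<le> r" "r < 1"
  shows "0 \<le> ln (r / (1 - r))"
proof -
  have "1 \<le> r / (1 - r)" using assms by (simp add: field_simps)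
  then show ?thesis by simp
qed

lemma cprof: "0 \<le> c \<Longrightarrow> c \<le> 1 \<Longrightarrow> (\<lambda>_. c) \<in> profiles"
proof -
  assume "0 \<le> c" "c \<le> 1"
  have [measurable]: "{-1..1::real} \<in> sets lebesgue" by simp
  have "(\<lambda>x::real. indicator {-1..1} x * c) \<in> borel_measurable lebesgue" by measurable
  then show ?thesis unfolding profiles_def set_borel_measurable_def using \<open>0 \<le> c\<close> \<open>c \<le> 1\<close> by auto
qed

lemma S_facts: "{-1..1::real} \<in> sets lebesgue" "emeasure lebesgue {-1..1::real} < \<infinity>"
  "measure lebesgue {-1..1::real} = 2" "{-1..1::real} \<subseteq> {-1..1}"
  by auto

lemma S'_facts: "{-1..<1::real} \<in> sets lebesgue" "emeasure lebesgue {-1..<1::real} < \<infinity>"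
  "measure lebesgue {-1..<1::real} = 2" "{-1..<1::real} \<subseteq> {-1..1}"
  by auto

lemma H1:
  assumes "\<rho> \<in> profiles"
  shows "Hfun \<rho> (phiy a b 1) = 1/2 * (LINT x:{-1..<1}|lebesgue. (1 - \<rho> x) * a - ln (1 + exp a))"
proof -
  have "Hfun \<rho> (phiy a b 1) = 1/2 * (LINT x:{-1..<1}|lebesgue. (1 - \<rho> x) * phiy a b 1 x - ln (1 + exp (phiy a b 1 x)))"
    unfolding Hfun_def by (subst cong_S'[OF intH[OF assms S_facts(1,4,2)]]) simp
  also have "\<dots> = 1/2 * (LINT x:{-1..<1}|lebesgue. (1 - \<rho> x) * a - ln (1 + exp a))"
    by (subst set_lebesgue_integral_cong[where g="\<lambda>x. (1 - \<rho> x) * a - ln (1 + exp a)"]) (auto simp: phiy_def)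
  finally show ?thesis .
qed

lemma Hm1:
  shows "Hfun \<rho> (phiy a b (-1)) = 1/2 * (LINT x:{-1..1}|lebesgue. (1 - \<rho> x) * b - ln (1 + exp b))"
  unfolding Hfun_def
  by (subst set_lebesgue_integral_cong[where g="\<lambda>x. (1 - \<rho> x) * b - ln (1 + exp b)"]) (auto simp: phiy_def)

theorem proposition2p1:
  fixes rm rp :: real
  assumes "0 < rm" "rm < rp" "rp < 1"
  defines "phim \<equiv> ln (rm / (1 - rm))" and "phip \<equiv> ln (rp / (1 - rp))"
  defines "phi0 \<equiv> max \<bar>phim\<bar> \<bar>phip\<bar>"
  shows "Ebot rm rp = - Vbar rm rp - ln (1 + exp phi0) \<and>
         Etop rm rp = - Vbar rm rp +
           (if rm \<le> 1/2 \<and> 1/2 \<le> rp then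
              (phim * ln (1 + exp phip) - phip * ln (1 + exp phim)) / (phip - phim)
            else if rp \<le> 1/2 then - ln (1 + exp phip)
            else - ln (1 + exp (- phim)))"
proof -
  define G where "G \<rho> = Inf ((\<lambda>\<phi>. Hfun \<rho> \<phi>) ` PhiSet phim phip)" for \<rho>
  define Lm where "Lm = ln (1 + exp phim)"
  define Lp where "Lp = ln (1 + exp phip)"
  have mp: "phim < phip" unfolding phim_def phip_def using assms by (intro logit_mono) auto
  have img: "(\<lambda>\<phi>. Hfun \<rho> \<phi>) ` PhiSet phim phip = (\<lambda>y. Hfun \<rho> (phiy phim phip y)) ` {-1..1}" for \<rho>
  proof -
    have "PhiSet phim phip = phiy phim phip ` {-1..1}" unfolding PhiSet_def by blast
    then show ?thesis by (simp add: image_image)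
  qed
  have E: "entropyS \<rho> + Vplus rm rp \<rho> = G \<rho> - Vbar rm rp" for \<rho>
    unfolding Vplus_def G_def logit_def phim_def phip_def by simp
  have LB: "- ln (1 + exp phi0) \<le> Hfun \<rho> (phiy phim phip y)" if "\<rho> \<in> profiles" for \<rho> y
  proof -
    have "2 * (- ln (1 + exp phi0)) \<le> (LINT x:{-1..1}|lebesgue. (1 - \<rho> x) * phiy phim phip y x - ln (1 + exp (phiy phim phip y x)))"
    proof (rule mono_lower[OF S_facts(1-3) intH[OF that S_facts(1,4,2)]])
      fix x :: real assume "x \<in> {-1..1}"
      then have "0 \<le> \<rho> x" "\<rho> x \<le> 1" using that unfolding profiles_def by auto
      moreover have "\<bar>phiy phim phip y x\<bar> \<le> phi0" unfolding phiy_def phi0_def by auto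
      ultimately show "- ln (1 + exp phi0) \<le> (1 - \<rho> x) * phiy phim phip y x - ln (1 + exp (phiy phim phip y x))"
        by (rule PW1)
    qed
    then show ?thesis unfolding Hfun_def by simp
  qed
  have bdd: "bdd_below ((\<lambda>y. Hfun \<rho> (phiy phim phip y)) ` {-1..1})" if "\<rho> \<in> profiles" for \<rho>
    using LB[OF that] by (intro bdd_belowI2[where m="- ln (1 + exp phi0)"])
  have Gle: "G \<rho> \<le> Hfun \<rho> (phiy phim phip y)" if "\<rho> \<in> profiles" "y \<in> {-1..1}" for \<rho> y
    unfolding G_def img using bdd[OF that(1)] that(2) by (auto intro: cInf_lower)
  have Gge: "c \<le> G \<rho>" if "\<And>y. y \<in> {-1..1} \<Longrightarrow> c \<le> Hfun \<rho> (phiy phim phip y)" for \<rho> c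
    unfolding G_def img using that by (intro cInf_greatest) auto
  have GLB: "- ln (1 + exp phi0) \<le> G \<rho>" if "\<rho> \<in> profiles" for \<rho>
    using LB[OF that] by (intro Gge) auto
  have prof_int: "0 \<le> \<rho> x \<and> \<rho> x \<le> 1" if "\<rho> \<in> profiles" "x \<in> {-1..1}" for \<rho> x
    using that unfolding profiles_def by auto
  have bot: "Ebot rm rp = - Vbar rm rp - ln (1 + exp phi0)"
  proof -
    obtain \<rho>0 where p0: "\<rho>0 \<in> profiles" and g0: "G \<rho>0 = - ln (1 + exp phi0)"
    proof (cases "\<bar>phim\<bar> \<le> \<bar>phip\<bar>")
      case True
      define c where "c = (if 0 \<le> phip then 1 else (0::real))"
      have pc: "(\<lambda>_. c) \<in> profiles" by (rule cprof) (auto simp: c_def)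
      have val: "(1 - c) * phip - ln (1 + exp phip) = - ln (1 + exp phi0)"
        using True Lsym[of phip] by (auto simp: c_def phi0_def)
      have "Hfun (\<lambda>_. c) (phiy phim phip (-1)) = - ln (1 + exp phi0)"
        unfolding Hm1 val using const_val[OF S_facts(1-3)] by simp
      then have "G (\<lambda>_. c) = - ln (1 + exp phi0)"
        using Gle[OF pc, of "-1"] GLB[OF pc] by simp
      then show ?thesis using that pc by blast
    next
      case False
      define c where "c = (if 0 \<le> phim then 1 else (0::real))"
      have pc: "(\<lambda>_. c) \<in> profiles" by (rule cprof) (auto simp: c_def)
      have val: "(1 - c) * phim - ln (1 + exp phim) = - ln (1 + exp phi0)"
        using False Lsym[of phim] by (auto simp: c_def phi0_def)
      have "Hfun (\<lambda>_. c) (phiy phim phip 1) = - ln (1 + exp phi0)"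
        unfolding H1[OF pc] val using const_val[OF S'_facts(1-3)] by simp
      then have "G (\<lambda>_. c) = - ln (1 + exp phi0)"
        using Gle[OF pc, of "1"] GLB[OF pc] by simp
      then show ?thesis using that pc by blast
    qed
    have "Ebot rm rp = Inf ((\<lambda>\<rho>. G \<rho> - Vbar rm rp) ` profiles)"
      unfolding Ebot_def E ..
    also have "\<dots> = G \<rho>0 - Vbar rm rp"
    proof (rule cInf_eq_minimum)
      show "G \<rho>0 - Vbar rm rp \<in> (\<lambda>\<rho>. G \<rho> - Vbar rm rp) ` profiles" using p0 by blast
    next
      fix x assume "x \<in> (\<lambda>\<rho>. G \<rho> - Vbar rm rp) ` profiles"
      then show "G \<rho>0 - Vbar rm rp \<le> x" using GLB g0 by auto
    qed
    finally show ?thesis using g0 by simp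
  qed
  have top_gen: "Etop rm rp = - Vbar rm rp + v"
    if p0: "\<rho>0 \<in> profiles" and g0: "G \<rho>0 = v" and up: "\<And>\<rho>. \<rho> \<in> profiles \<Longrightarrow> G \<rho> \<le> v" for \<rho>0 v
  proof -
    have "Etop rm rp = Sup ((\<lambda>\<rho>. G \<rho> - Vbar rm rp) ` profiles)"
      unfolding Etop_def E ..
    also have "\<dots> = G \<rho>0 - Vbar rm rp"
    proof (rule cSup_eq_maximum)
      show "G \<rho>0 - Vbar rm rp \<in> (\<lambda>\<rho>. G \<rho> - Vbar rm rp) ` profiles" using p0 by blast
    next
      fix x assume "x \<in> (\<lambda>\<rho>. G \<rho> - Vbar rm rp) ` profiles"
      then show "x \<le> G \<rho>0 - Vbar rm rp" using up g0 by auto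
    qed
    finally show ?thesis using g0 by simp
  qed
  have top: "Etop rm rp = - Vbar rm rp +
           (if rm \<le> 1/2 \<and> 1/2 \<le> rp then
              (phim * ln (1 + exp phip) - phip * ln (1 + exp phim)) / (phip - phim)
            else if rp \<le> 1/2 then - ln (1 + exp phip)
            else - ln (1 + exp (- phim)))"
  proof (cases "rm \<le> 1/2 \<and> 1/2 \<le> rp")
    case A: True
    have sm: "phim \<le> 0" unfolding phim_def using A assms by (intro logit_nonpos) auto
    have sp: "0 \<le> phip" unfolding phip_def using A assms by (intro logit_nonneg) auto
    define s where "s = (Lp - Lm) / (phip - phim)"
    define v where "v = s * phip - Lp"
    have d: "phip - phim > 0" using mp by simp
    have LmLp: "Lm \<le> Lp" unfolding Lm_def Lp_def using mp by (intro Lmono) auto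
    have s0: "0 \<le> s" unfolding s_def using d LmLp by simp
    have "ln (1 + exp (- phip)) \<le> ln (1 + exp (- phim))" using mp by (intro Lmono) auto
    then have "Lp - Lm \<le> phip - phim" unfolding Lp_def Lm_def using Lsym[of phip] Lsym[of phim] by linarith
    then have s1: "s \<le> 1" unfolding s_def using d by simp
    have sd: "s * (phip - phim) = Lp - Lm" unfolding s_def using d by simp
    have v2: "s * phim - Lm = v" unfolding v_def using sd by (simp add: algebra_simps)
    have tv: "(phim * ln (1 + exp phip) - phip * ln (1 + exp phim)) / (phip - phim) = v"
      unfolding v_def s_def Lp_def[symmetric] Lm_def[symmetric] using d by (simp add: field_simps)
    have pc: "(\<lambda>_. 1 - s) \<in> profiles" using s0 s1 by (intro cprof) auto
    have "G (\<lambda>_. 1 - s) = v"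
    proof (rule antisym)
      have "Hfun (\<lambda>_. 1 - s) (phiy phim phip (-1)) = v"
        unfolding Hm1 using const_val[OF S_facts(1-3)] by (simp add: v_def Lp_def)
      then show "G (\<lambda>_. 1 - s) \<le> v" using Gle[OF pc, of "-1"] by simp
    next
      show "v \<le> G (\<lambda>_. 1 - s)"
      proof (rule Gge)
        fix y :: real
        have "Hfun (\<lambda>_. 1 - s) (phiy phim phip y) = 1/2 * (LINT x:{-1..1::real}|lebesgue. v)"
        proof -
          have vp: "s * phip - ln (1 + exp phip) = v" by (simp add: v_def Lp_def)
          have vm: "s * phim - ln (1 + exp phim) = v" using v2 by (simp add: Lm_def)
          have pw: "\<forall>x. x \<in> {-1..1} \<longrightarrow> (1 - (\<lambda>_. 1 - s) x) * phiy phim phip y x - ln (1 + exp (phiy phim phip y x)) = v"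
            by (auto simp: phiy_def vp vm)
          have "(LINT x:{-1..1}|lebesgue. (1 - (\<lambda>_. 1 - s) x) * phiy phim phip y x - ln (1 + exp (phiy phim phip y x)))
              = (LINT x:{-1..1::real}|lebesgue. v)"
            by (rule set_lebesgue_integral_cong[OF _ pw]) simp
          then show ?thesis unfolding Hfun_def by simp
        qed
        then show "v \<le> Hfun (\<lambda>_. 1 - s) (phiy phim phip y)"
          using const_val[OF S_facts(1-3)] by simp
      qed
    qed
    moreover have "G \<rho> \<le> v" if pr: "\<rho> \<in> profiles" for \<rho>
    proof -
      define J where "J = (LINT x:{-1..1}|lebesgue. 1 - \<rho> x - s)"
      have iJ: "set_integrable lebesgue {-1..1} (\<lambda>x. 1 - \<rho> x - s)"
        by (rule intG[OF pr S_facts(1,4,2)])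
      have iJ': "set_integrable lebesgue {-1..<1} (\<lambda>x. 1 - \<rho> x - s)"
        by (rule intG[OF pr S'_facts(1,4,2)])
      have J': "(LINT x:{-1..<1}|lebesgue. 1 - \<rho> x - s) = J"
        unfolding J_def by (rule cong_S'[OF iJ, symmetric])
      have "Hfun \<rho> (phiy phim phip (-1)) = 1/2 * (LINT x:{-1..1}|lebesgue. v + phip * (1 - \<rho> x - s))"
        unfolding Hm1 v_def Lp_def by (simp add: algebra_simps)
      also have "\<dots> = 1/2 * (2 * v + phip * J)"
        unfolding J_def
        using set_integral_add(2)[OF const_int[OF S_facts(1,2), of v] set_integrable_mult_right[OF iJ, of phip]]
          const_val[OF S_facts(1-3)] by simp
      finally have h1: "Hfun \<rho> (phiy phim phip (-1)) = v + phip * J / 2" by simp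
      have "Hfun \<rho> (phiy phim phip 1) = 1/2 * (LINT x:{-1..<1}|lebesgue. v + phim * (1 - \<rho> x - s))"
        unfolding H1[OF pr] v2[symmetric] Lm_def by (simp add: algebra_simps)
      also have "\<dots> = 1/2 * (2 * v + phim * J)"
        unfolding J'[symmetric]
        using set_integral_add(2)[OF const_int[OF S'_facts(1,2), of v] set_integrable_mult_right[OF iJ', of phim]]
          const_val[OF S'_facts(1-3)] by simp
      finally have h2: "Hfun \<rho> (phiy phim phip 1) = v + phim * J / 2" by simp
      show ?thesis
      proof (cases "J \<le> 0")
        case True
        then have "phip * J \<le> 0" using sp by (simp add: mult_nonneg_nonpos)
        then show ?thesis using Gle[OF pr, of "-1"] h1 by simp
      next
        case False
        then have "phim * J \<le> 0" using sm by (simp add: mult_nonpos_nonneg)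
        then show ?thesis using Gle[OF pr, of "1"] h2 by simp
      qed
    qed
    ultimately show ?thesis using A tv top_gen[OF pc] by simp
  next
    case nA: False
    show ?thesis
    proof (cases "rp \<le> 1/2")
      case B: True
      have sp: "phip \<le> 0" unfolding phip_def using B assms by (intro logit_nonpos) auto
      have pc: "(\<lambda>_. 1) \<in> profiles" by (rule cprof) auto
      have "G (\<lambda>_. 1) = - Lp"
      proof (rule antisym)
        have "Hfun (\<lambda>_. 1) (phiy phim phip (-1)) = - Lp"
          unfolding Hm1 using const_val[OF S_facts(1-3)] by (simp add: Lp_def)
        then show "G (\<lambda>_. 1) \<le> - Lp" using Gle[OF pc, of "-1"] by simp
      next
        show "- Lp \<le> G (\<lambda>_. 1)"
        proof (rule Gge)
          fix y :: real
          have "2 * (- Lp) \<le> (LINT x:{-1..1}|lebesgue. (1 - (\<lambda>_. 1::real) x) * phiy phim phip y x - ln (1 + exp (phiy phim phip y x)))"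
          proof (rule mono_lower[OF S_facts(1-3) intH[OF pc S_facts(1,4,2)]])
            fix x :: real
            have "ln (1 + exp phim) \<le> Lp" unfolding Lp_def using mp by (intro Lmono) auto
            then show "- Lp \<le> (1 - (\<lambda>_. 1::real) x) * phiy phim phip y x - ln (1 + exp (phiy phim phip y x))"
              by (auto simp: phiy_def Lp_def)
          qed
          then show "- Lp \<le> Hfun (\<lambda>_. 1) (phiy phim phip y)" unfolding Hfun_def by simp
        qed
      qed
      moreover have "G \<rho> \<le> - Lp" if pr: "\<rho> \<in> profiles" for \<rho>
      proof -
        have "(LINT x:{-1..1}|lebesgue. (1 - \<rho> x) * phip - ln (1 + exp phip)) \<le> 2 * (- Lp)"
        proof (rule mono_upper[OF S_facts(1-3)])
          show "set_integrable lebesgue {-1..1} (\<lambda>x. (1 - \<rho> x) * phip - ln (1 + exp phip))"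
            using intH[OF pr S_facts(1,4,2), of phim phip "-1"]
            by (rule set_integrable_cong_helper)
        next
          fix x :: real assume "x \<in> {-1..1}"
          then have "0 \<le> 1 - \<rho> x" using prof_int[OF pr] by auto
          then have "(1 - \<rho> x) * phip \<le> 0" using sp by (simp add: mult_nonneg_nonpos)
          then show "(1 - \<rho> x) * phip - ln (1 + exp phip) \<le> - Lp" by (simp add: Lp_def)
        qed
        then show ?thesis using Gle[OF pr, of "-1"] unfolding Hm1 by simp
      qed
      ultimately have "Etop rm rp = - Vbar rm rp + - Lp" by (rule top_gen[OF pc])
      then show ?thesis unfolding if_not_P[OF nA] if_P[OF B] Lp_def .
    next
      case C: False
      then have "1/2 \<le> rm" using nA by auto
      then have sm: "0 \<le> phim" unfolding phim_def using assms by (intro logit_nonneg) auto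
      define w where "w = - ln (1 + exp (- phim))"
      have pc: "(\<lambda>_. 0) \<in> profiles" by (rule cprof) auto
      have "G (\<lambda>_. 0) = w"
      proof (rule antisym)
        have "Hfun (\<lambda>_. 0) (phiy phim phip 1) = w"
          unfolding H1[OF pc] using const_val[OF S'_facts(1-3)] Lsym[of phim] by (simp add: w_def)
        then show "G (\<lambda>_. 0) \<le> w" using Gle[OF pc, of "1"] by simp
      next
        show "w \<le> G (\<lambda>_. 0)"
        proof (rule Gge)
          fix y :: real
          have "2 * w \<le> (LINT x:{-1..1}|lebesgue. (1 - (\<lambda>_. 0::real) x) * phiy phim phip y x - ln (1 + exp (phiy phim phip y x)))"
          proof (rule mono_lower[OF S_facts(1-3) intH[OF pc S_facts(1,4,2)]])
            fix x :: real
            have "ln (1 + exp (- phip)) \<le> ln (1 + exp (- phim))" using mp by (intro Lmono) auto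
            then show "w \<le> (1 - (\<lambda>_. 0::real) x) * phiy phim phip y x - ln (1 + exp (phiy phim phip y x))"
              using Lsym[of phim] Lsym[of phip] by (auto simp: phiy_def w_def)
          qed
          then show "w \<le> Hfun (\<lambda>_. 0) (phiy phim phip y)" unfolding Hfun_def by simp
        qed
      qed
      moreover have "G \<rho> \<le> w" if pr: "\<rho> \<in> profiles" for \<rho>
      proof -
        have "(LINT x:{-1..<1}|lebesgue. (1 - \<rho> x) * phim - ln (1 + exp phim)) \<le> 2 * w"
        proof (rule mono_upper[OF S'_facts(1-3)])
          show "set_integrable lebesgue {-1..<1} (\<lambda>x. (1 - \<rho> x) * phim - ln (1 + exp phim))"
            using intH[OF pr S'_facts(1,4,2), of phim phip "1"]
            by (rule set_integrable_cong_helper')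
        next
          fix x :: real assume "x \<in> {-1..<1}"
          then have "0 \<le> \<rho> x" using prof_int[OF pr] by auto
          then have "(1 - \<rho> x) * phim \<le> phim" using sm by (simp add: algebra_simps)
          then show "(1 - \<rho> x) * phim - ln (1 + exp phim) \<le> w" using Lsym[of phim] by (simp add: w_def)
        qed
        then show ?thesis using Gle[OF pr, of "1"] unfolding H1[OF pr] by simp
      qed
      ultimately have "Etop rm rp = - Vbar rm rp + w" by (rule top_gen[OF pc])
      then show ?thesis unfolding if_not_P[OF nA] if_not_P[OF C] w_def .
    qed
  qed
  show ?thesis using bot top by simp
qed

end
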